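(* Let $T$ be a tournament of order $n\ge 3$. If $V(T)$ has a partition $X,Y$ with $\big||X|-|Y|\big|\le 1$ such that every arc of $T$ between $X$ and $Y$ goes from $X$ to $Y$ (i.e. $(x,y)\in A(T)$ for all $x\in X$, $y\in Y$), then $T$ has no $\overrightarrow{P_3}$-decomposition.
   Context: A tournament is an orientation of a complete graph. A $\overrightarrow{P_3}$-decomposition of a digraph is a partition of its arc set into directed paths of length $2$. *)

theory Defs
  imports Main
begin

definition tournament :: "'a set \<Rightarrow> ('a \<times> 'a) set \<Rightarrow> bool" where
  "tournament V A \<longleftrightarrow>
     A \<subseteq> V \<times> V \<and> (\<forall>v. (v, v) \<notin> A) \<and>
     (\<forall>u\<in>V. \<forall>v\<in>V. u \<noteq> v \<longrightarrow> ((u, v) \<in> A \<longleftrightarrow> (v, u) \<notin> A))"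

definition p3_arcs :: "'a \<times> 'a \<times> 'a \<Rightarrow> ('a \<times> 'a) set" where
  "p3_arcs p = (case p of (u, v, w) \<Rightarrow> {(u, v), (v, w)})"

definition is_p3 :: "('a \<times> 'a) set \<Rightarrow> 'a \<times> 'a \<times> 'a \<Rightarrow> bool" where
  "is_p3 A p \<longleftrightarrow> (case p of (u, v, w) \<Rightarrow>
      u \<noteq> v \<and> v \<noteq> w \<and> u \<noteq> w \<and> (u, v) \<in> A \<and> (v, w) \<in> A)"

definition P3_decomposition :: "('a \<times> 'a) set \<Rightarrow> ('a \<times> 'a \<times> 'a) set \<Rightarrow> bool" where
  "P3_decomposition A P \<longleftrightarrow>
     (\<forall>p\<in>P. is_p3 A p) \<and>
     (\<forall>p\<in>P. \<forall>q\<in>P. p \<noteq> q \<longrightarrow> p3_arcs p \<inter> p3_arcs q = {}) \<and>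
     (\<Union>p\<in>P. p3_arcs p) = A"

definition has_P3_decomposition :: "('a \<times> 'a) set \<Rightarrow> bool" where
  "has_P3_decomposition A \<longleftrightarrow> (\<exists>P. P3_decomposition A P)"

end

theory Submission
  imports Defs
begin

lemma arith_aux:
  fixes a b :: nat
  assumes "4 * (a * b) \<le> (a + b) * (a + b - 1)" "a + b \<ge> 3" "a \<le> b + 1" "b \<le> a + 1"
  shows False
proof -
  have "(a = b \<and> a \<ge> 2) \<or> (b = a + 1 \<and> a \<ge> 1) \<or> (a = b + 1 \<and> b \<ge> 1)" using assms(2-4) by linarith
  then show False
  proof (elim disjE conjE)
    assume h: "a = b" "a \<ge> 2"
    define k where "k = a - 2"
    have "a = k + 2" "b = k + 2" using h unfolding k_def by simp_all
    then show False using assms(1) by (simp add: algebra_simps)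
  next
    assume h: "b = a + 1" "a \<ge> 1"
    define k where "k = a - 1"
    have "a = k + 1" "b = k + 2" using h unfolding k_def by simp_all
    then show False using assms(1) by (simp add: algebra_simps)
  next
    assume h: "a = b + 1" "b \<ge> 1"
    define k where "k = b - 1"
    have "a = k + 2" "b = k + 1" using h unfolding k_def by simp_all
    then show False using assms(1) by (simp add: algebra_simps)
  qed
qed

lemma tourn_card:
  assumes "finite V" "tournament V A"
  shows "2 * card A = card V * (card V - 1)"
proof -
  have sub: "A \<subseteq> V \<times> V" and loop: "\<forall>v. (v, v) \<notin> A"
    and tot: "\<forall>u\<in>V. \<forall>v\<in>V. u \<noteq> v \<longrightarrow> ((u, v) \<in> A \<longleftrightarrow> (v, u) \<notin> A)"
    using assms(2) unfolding tournament_def by (blast, blast, blast)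
  define B where "B = prod.swap ` A"
  have fA: "finite A" using sub assms(1) finite_subset by blast
  have cB: "card B = card A" unfolding B_def by (simp add: card_image)
  have fB: "finite B" unfolding B_def using fA by simp
  have disj: "A \<inter> B = {}"
  proof (rule ccontr)
    assume "A \<inter> B \<noteq> {}"
    then obtain u v where "(u,v) \<in> A" "(v,u) \<in> A" unfolding B_def by auto
    moreover have "u \<noteq> v" using loop \<open>(u,v) \<in> A\<close> by auto
    ultimately show False using tot sub by blast
  qed
  have un: "A \<union> B = V \<times> V - Id_on V"
  proof
    show "A \<union> B \<subseteq> V \<times> V - Id_on V" using sub loop unfolding B_def by (auto simp: Id_on_def)
    show "V \<times> V - Id_on V \<subseteq> A \<union> B"
    proof
      fix e assume "e \<in> V \<times> V - Id_on V"
      then obtain u v where e: "e = (u,v)" "u \<in> V" "v \<in> V" "u \<noteq> v" by (auto simp: Id_on_def)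
      then have "(u,v) \<in> A \<or> (v,u) \<in> A" using tot by blast
      moreover have "(v,u) \<in> A \<Longrightarrow> (u,v) \<in> B" unfolding B_def by (rule image_eqI[where x="(v,u)"]) auto
      ultimately show "e \<in> A \<union> B" unfolding e(1) by blast
    qed
  qed
  have "card (A \<union> B) = card A + card B" using card_Un_disjoint[OF fA fB disj] .
  moreover have "card (V \<times> V - Id_on V) = card V * card V - card V"
  proof -
    have "Id_on V \<subseteq> V \<times> V" by auto
    moreover have "card (Id_on V) = card V"
    proof -
      have "Id_on V = (\<lambda>x. (x,x)) ` V" by (auto simp: Id_on_def)
      then show ?thesis by (simp add: card_image inj_on_def)
    qed
    ultimately show ?thesis using assms(1)
      by (simp add: card_Diff_subset card_cartesian_product finite_subset)
  qed
  ultimately show ?thesis using un cB by (simp add: diff_mult_distrib2)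
qed

theorem corollary3p4:
  fixes V :: "'a set" and A :: "('a \<times> 'a) set" and X Y :: "'a set"
  assumes "finite V" and "card V \<ge> 3"
    and "tournament V A"
    and "X \<union> Y = V" and "X \<inter> Y = {}"
    and "\<bar>int (card X) - int (card Y)\<bar> \<le> 1"
    and "\<forall>x\<in>X. \<forall>y\<in>Y. (x, y) \<in> A"
  shows "\<not> has_P3_decomposition A"
proof
  assume hd: "has_P3_decomposition A"
  obtain P where isp: "\<forall>p\<in>P. is_p3 A p"
    and dj: "\<forall>p\<in>P. \<forall>q\<in>P. p \<noteq> q \<longrightarrow> p3_arcs p \<inter> p3_arcs q = {}"
    and cov: "(\<Union>p\<in>P. p3_arcs p) = A"
  proof -
    from hd obtain P where "P3_decomposition A P" unfolding has_P3_decomposition_def by blast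
    then show ?thesis using that unfolding P3_decomposition_def by blast
  qed
  have sub: "A \<subseteq> V \<times> V" and loop: "\<forall>v. (v, v) \<notin> A"
    and tot: "\<forall>u\<in>V. \<forall>v\<in>V. u \<noteq> v \<longrightarrow> ((u, v) \<in> A \<longleftrightarrow> (v, u) \<notin> A)"
    using assms(3) unfolding tournament_def by (blast, blast, blast)
  have PV: "P \<subseteq> V \<times> V \<times> V"
  proof
    fix p assume "p \<in> P"
    then show "p \<in> V \<times> V \<times> V" using isp sub
      by (cases p) (auto simp: is_p3_def)
  qed
  have fP: "finite P" using PV assms(1) finite_subset by blast
  have c2: "\<forall>p\<in>P. card (p3_arcs p) = 2"
  proof
    fix p assume "p \<in> P"
    then show "card (p3_arcs p) = 2" using isp
      by (cases p) (auto simp: is_p3_def p3_arcs_def)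
  qed
  have finarcs: "\<forall>p\<in>P. finite (p3_arcs p)" by (auto simp: p3_arcs_def split: prod.splits)
  have "card A = (\<Sum>p\<in>P. card (p3_arcs p))"
    using card_UN_disjoint[OF fP] finarcs dj cov by metis
  also have "\<dots> = 2 * card P" using c2 by simp
  finally have cA: "card A = 2 * card P" .
  \<comment> \<open>each arc from X to Y lies in a path; each path has at most one such arc\<close>
  define f where "f e = (SOME p. p \<in> P \<and> e \<in> p3_arcs p)" for e
  have XYA: "X \<times> Y \<subseteq> A" using assms(7) by auto
  have fin: "\<And>e. e \<in> A \<Longrightarrow> f e \<in> P \<and> e \<in> p3_arcs (f e)"
  proof -
    fix e assume "e \<in> A"
    then have "\<exists>p. p \<in> P \<and> e \<in> p3_arcs p" using cov by blast
    then show "f e \<in> P \<and> e \<in> p3_arcs (f e)" unfolding f_def by (rule someI_ex)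
  qed
  have noYX: "\<And>x y. x \<in> X \<Longrightarrow> y \<in> Y \<Longrightarrow> (y, x) \<notin> A"
  proof -
    fix x y assume "x \<in> X" "y \<in> Y"
    moreover have "x \<noteq> y" using assms(5) \<open>x \<in> X\<close> \<open>y \<in> Y\<close> by auto
    ultimately show "(y, x) \<notin> A" using tot assms(4,7) by blast
  qed
  have inj: "inj_on f (X \<times> Y)"
  proof (rule inj_onI)
    fix e1 e2 assume e1: "e1 \<in> X \<times> Y" and e2: "e2 \<in> X \<times> Y" and eq: "f e1 = f e2"
    have a1: "e1 \<in> A" and a2: "e2 \<in> A" using e1 e2 XYA by auto
    have "e1 \<in> p3_arcs (f e1)" using fin[OF a1] by blast
    moreover have "e2 \<in> p3_arcs (f e1)" using fin[OF a2] eq by simp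
    moreover obtain u v w where fe: "f e1 = (u,v,w)" by (cases "f e1") blast
    moreover have "p3_arcs (u,v,w) = {(u,v),(v,w)}" by (simp add: p3_arcs_def)
    ultimately have uvw: "e1 \<in> {(u,v),(v,w)}" "e2 \<in> {(u,v),(v,w)}" by simp_all
    have nb: "\<not> ((u,v) \<in> X \<times> Y \<and> (v,w) \<in> X \<times> Y)" using assms(5) by auto
    show "e1 = e2" using uvw e1 e2 nb by blast
  qed
  have "f ` (X \<times> Y) \<subseteq> P" using fin XYA by blast
  then have "card (X \<times> Y) \<le> card P"
    using card_inj_on_le[OF inj _ fP] by blast
  then have le: "card X * card Y \<le> card P" by (simp add: card_cartesian_product)
  have fX: "finite X" "finite Y" using assms(1,4) by auto
  have cV: "card V = card X + card Y" using card_Un_disjoint[OF fX assms(5)] assms(4) by simp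
  have "2 * card A = card V * (card V - 1)" using tourn_card[OF assms(1,3)] .
  then have "4 * (card X * card Y) \<le> card V * (card V - 1)" using cA le by linarith
  then have key: "4 * (card X * card Y) \<le> (card X + card Y) * (card X + card Y - 1)" by (simp only: cV)
  show False
    by (rule arith_aux[OF key]) (use assms(2,6) cV in linarith)+
qed

end
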